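(* A slice function $f\in\mathcal{S}(\Omega)$ admits a multiplicative inverse $f^{-\bullet}$ in the algebra $\mathcal{S}(\Omega)$ (with respect to the slice product) if, and only if, $f^c$ does. If this is the case, then $(f^c)^{-\bullet}=(f^{-\bullet})^c$. Furthermore, $f$ admits a multiplicative inverse $f^{-\bullet}$ if, and only if, both $N(f)$ and $N(f^c)$ do. If this is the case, then \[f^{-\bullet}=f^c\cdot N(f)^{-\bullet}=N(f^c)^{-\bullet}\cdot f^c.\] Moreover, $N(f)^{-\bullet}=(f^{-\bullet})^c\cdot f^{-\bullet}=N((f^{-\bullet})^c)$.
   Context: Let $A$ be a finite-dimensional real algebra with unit $1$ ($\mathbb{R}$ identified with $\mathbb{R}1$) which is alternative (the associator $(x,y,z)=(xy)z-x(yz)$ is alternating), with a $^*$-involution $x\mapsto x^c$ (real linear, $(x^c)^c=x$, $(xy)^c=y^cx^c$, $r^c=r$ for $r\in\mathbb{R}$). Let $t(x)=x+x^c$, $n(x)=xx^c$, $\mathbb{S}_A=\{J\in A:t(J)=0,n(J)=1\}$ (assumed non-empty), $Q_A=\mathbb{R}\cup\{x\in A:t(x),n(x)\in\mathbb{R},\ 4n(x)>t(x)^2\}$; every $x\in Q_A$ is $\alpha+\beta J$ with $\alpha,\beta\in\mathbb{R}$, $J\in\mathbb{S}_A$. Let $D\subseteq\mathbb{C}$ be non-empty and invariant under complex conjugation and $\Omega=\{\alpha+\beta J:\alpha+i\beta\in D,\ J\in\mathbb{S}_A\}$. Let $A_{\mathbb{C}}=\{a+\imath b:a,b\in A\}$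 with product $(a+\imath b)(a'+\imath b')=aa'-bb'+\imath(ab'+ba')$, conjugation $\overline{a+\imath b}=a-\imath b$ and involution $(a+\imath b)^c=a^c+\imath b^c$. A stem function is $F=F_1+\imath F_2:D\to A_{\mathbb{C}}$ with $F(\bar z)=\overline{F(z)}$; it induces the slice function $f=\mathcal{I}(F):\Omega\to A$, $f(\alpha+\beta J)=F_1(\alpha+i\beta)+JF_2(\alpha+i\beta)$ (each slice function is induced by a unique stem function). $\mathcal{S}(\Omega)$ is the set of slice functions on $\Omega$, with pointwise sum, slice product $f\cdot g=\mathcal{I}(FG)$ (pointwise product of the stem functions in $A_{\mathbb{C}}$), conjugate $f^c=\mathcal{I}(F^c)$ where $F^c(z)=F(z)^c$, and normal function $N(f)=f\cdot f^c$; with these operations $\mathcal{S}(\Omega)$ is a real alternative $^*$-algebra with unit the constant $1$. $h^{-\bullet}$ denotes the two-sided multiplicative inverse of $h$ in $\mathcal{S}(\Omega)$. *)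

theory Defs
  imports Complex_Main
begin

text \<open>The product is NOT assumed associative; alternativity is expressed by the left and
  right alternative laws (equivalent to the associator being alternating).\<close>

class alt_star_algebra = real_vector + one + times +
  fixes invol :: "'a \<Rightarrow> 'a"
  assumes distrib_right: "(a + b) * c = a * c + b * c"
    and distrib_left: "a * (b + c) = a * b + a * c"
    and scaleR_mult_left: "(r *\<^sub>R a) * b = r *\<^sub>R (a * b)"
    and scaleR_mult_right: "a * (r *\<^sub>R b) = r *\<^sub>R (a * b)"
    and one_mult: "1 * a = a"
    and mult_one: "a * 1 = a"
    and one_neq_zero: "(1::'a) \<noteq> 0"
    and left_alternative: "(a * a) * b = a * (a * b)"
    and right_alternative: "(b * a) * a = b * (a * a)"
    and invol_add: "invol (a + b) = invol a + invol b"
    and invol_scaleR: "invol (r *\<^sub>R a) = r *\<^sub>R invol a"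
    and invol_invol: "invol (invol a) = a"
    and invol_mult: "invol (a * b) = invol b * invol a"
    and invol_one: "invol 1 = 1"
    and finite_dim: "\<exists>B. finite B \<and> (\<forall>x. \<exists>c. x = (\<Sum>b\<in>B. c b *\<^sub>R b))"

definition trace_A :: "'a::alt_star_algebra \<Rightarrow> 'a" where
  "trace_A x = x + invol x"
definition norm_A :: "'a::alt_star_algebra \<Rightarrow> 'a" where
  "norm_A x = x * invol x"
definition sphere_A :: "'a::alt_star_algebra set" where
  "sphere_A = {J. trace_A J = 0 \<and> norm_A J = 1}"

definition circ :: "complex set \<Rightarrow> 'a::alt_star_algebra set" where
  "circ D = {Re z *\<^sub>R 1 + Im z *\<^sub>R J | z J. z \<in> D \<and> J \<in> sphere_A}"

text \<open>A_C is represented by pairs (a,b) standing for a + i b.\<close>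
definition cmult :: "('a::alt_star_algebra \<times> 'a) \<Rightarrow> ('a \<times> 'a) \<Rightarrow> ('a \<times> 'a)" where
  "cmult p q = (fst p * fst q - snd p * snd q, fst p * snd q + snd p * fst q)"
definition cconj :: "('a::alt_star_algebra \<times> 'a) \<Rightarrow> ('a \<times> 'a)" where
  "cconj p = (fst p, - snd p)"
definition cinvol :: "('a::alt_star_algebra \<times> 'a) \<Rightarrow> ('a \<times> 'a)" where
  "cinvol p = (invol (fst p), invol (snd p))"

text \<open>Stem functions on D (extended by 0 outside D, so they are determined by their values on D).\<close>
definition is_stem :: "complex set \<Rightarrow> (complex \<Rightarrow> 'a::alt_star_algebra \<times> 'a) \<Rightarrow> bool" where
  "is_stem D F \<longleftrightarrow> (\<forall>z\<in>D. F (cnj z) = cconj (F z)) \<and> (\<forall>z. z \<notin> D \<longrightarrow> F z = (0, 0))"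

text \<open>f is induced by F: f(\<alpha>+\<beta>J) = F1(\<alpha>+i\<beta>) + J F2(\<alpha>+i\<beta>) on \<Omega>_D,
  and f is 0 outside \<Omega>_D (functions on \<Omega>_D are represented extensionally).\<close>
definition induces :: "complex set \<Rightarrow> (complex \<Rightarrow> 'a::alt_star_algebra \<times> 'a) \<Rightarrow> ('a \<Rightarrow> 'a) \<Rightarrow> bool" where
  "induces D F f \<longleftrightarrow>
     (\<forall>z J. z \<in> D \<longrightarrow> J \<in> sphere_A \<longrightarrow>
        f (Re z *\<^sub>R 1 + Im z *\<^sub>R J) = fst (F z) + J * snd (F z))
     \<and> (\<forall>x. x \<notin> circ D \<longrightarrow> f x = 0)"

definition slice_fun :: "complex set \<Rightarrow> ('a::alt_star_algebra \<Rightarrow> 'a) \<Rightarrow> bool" where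
  "slice_fun D f \<longleftrightarrow> (\<exists>F. is_stem D F \<and> induces D F f)"

definition stem_of :: "complex set \<Rightarrow> ('a::alt_star_algebra \<Rightarrow> 'a) \<Rightarrow> complex \<Rightarrow> 'a \<times> 'a" where
  "stem_of D f = (THE F. is_stem D F \<and> induces D F f)"

definition induced :: "complex set \<Rightarrow> (complex \<Rightarrow> 'a::alt_star_algebra \<times> 'a) \<Rightarrow> 'a \<Rightarrow> 'a" where
  "induced D F = (THE f. induces D F f)"

definition slice_mult :: "complex set \<Rightarrow> ('a::alt_star_algebra \<Rightarrow> 'a) \<Rightarrow> ('a \<Rightarrow> 'a) \<Rightarrow> 'a \<Rightarrow> 'a" where
  "slice_mult D f g = induced D (\<lambda>z. cmult (stem_of D f z) (stem_of D g z))"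

definition slice_cnj :: "complex set \<Rightarrow> ('a::alt_star_algebra \<Rightarrow> 'a) \<Rightarrow> 'a \<Rightarrow> 'a" where
  "slice_cnj D f = induced D (\<lambda>z. cinvol (stem_of D f z))"

definition slice_N :: "complex set \<Rightarrow> ('a::alt_star_algebra \<Rightarrow> 'a) \<Rightarrow> 'a \<Rightarrow> 'a" where
  "slice_N D f = slice_mult D f (slice_cnj D f)"

definition slice_one :: "complex set \<Rightarrow> 'a::alt_star_algebra \<Rightarrow> 'a" where
  "slice_one D = (\<lambda>x. if x \<in> circ D then 1 else 0)"

definition slice_invertible :: "complex set \<Rightarrow> ('a::alt_star_algebra \<Rightarrow> 'a) \<Rightarrow> bool" where
  "slice_invertible D f \<longleftrightarrow>
     (\<exists>g. slice_fun D g \<and> slice_mult D f g = slice_one D \<and> slice_mult D g f = slice_one D)"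

definition slice_inv :: "complex set \<Rightarrow> ('a::alt_star_algebra \<Rightarrow> 'a) \<Rightarrow> 'a \<Rightarrow> 'a" where
  "slice_inv D f = (THE g. slice_fun D g \<and> slice_mult D f g = slice_one D \<and> slice_mult D g f = slice_one D)"

end

theory Submission
  imports Defs "HOL-Library.Product_Plus"
begin


locale altr =
  fixes mul :: "'b::ab_group_add \<Rightarrow> 'b \<Rightarrow> 'b" (infixl "\<odot>" 70) and e :: 'b
  assumes dl: "a \<odot> (b + c) = a \<odot> b + a \<odot> c"
   and dr: "(a + b) \<odot> c = a \<odot> c + b \<odot> c"
   and el: "e \<odot> a = a" and er: "a \<odot> e = a"
   and la: "(a \<odot> a) \<odot> b = a \<odot> (a \<odot> b)"
   and ra: "(b \<odot> a) \<odot> a = b \<odot> (a \<odot> a)"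
   and two: "a + a = 0 \<Longrightarrow> a = 0"
begin

lemma m0r[simp]: "a \<odot> 0 = 0"
  using dl[of a 0 0] by simp
lemma m0l[simp]: "0 \<odot> a = 0"
  using dr[of 0 0 a] by simp
lemma mml: "(- a) \<odot> b = - (a \<odot> b)"
  using dr[of a "-a" b] by (simp add: eq_neg_iff_add_eq_0 add.commute)
lemma mmr: "a \<odot> (- b) = - (a \<odot> b)"
  using dl[of a b "-b"] by (simp add: eq_neg_iff_add_eq_0 add.commute)
lemma mdl: "(a - b) \<odot> c = a \<odot> c - b \<odot> c"
  using dr[of a "-b" c] by (simp add: mml)
lemma mdr: "a \<odot> (b - c) = a \<odot> b - a \<odot> c"
  using dl[of a b "-c"] by (simp add: mmr)

lemmas expand = dl dr mml mmr mdl mdr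

definition as :: "'b \<Rightarrow> 'b \<Rightarrow> 'b \<Rightarrow> 'b" where
  "as a b c = (a \<odot> b) \<odot> c - a \<odot> (b \<odot> c)"

lemma LA: "as a a c = 0" by (simp add: as_def la)
lemma RA: "as c a a = 0" by (simp add: as_def ra)
lemma Lz: "as a b c + as b a c = 0"
  using la[of "a+b" c] la[of a c] la[of b c] by (simp add: as_def expand algebra_simps)
lemma Rz: "as c a b + as c b a = 0"
  using ra[of c "a+b"] ra[of c a] ra[of c b] by (simp add: as_def expand algebra_simps)

lemmas relz = LA RA Lz Rz

lemma I1: "as x y (y \<odot> z) = as x y z \<odot> y"
proof -
  have r0: "((as x y z + as y x z) \<odot> y) = 0" by (simp only: Lz[of "x" "y" "z"] m0r m0l)
  have r1: "(as x y (y \<odot> z) + as y x (y \<odot> z)) = 0" by (simp only: Lz[of "x" "y" "(y \<odot> z)"] m0r m0l)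
  have r2: "(as y x (y \<odot> z) + as y (y \<odot> z) x) = 0" by (simp only: Rz[of "y" "x" "(y \<odot> z)"] m0r m0l)
  have r3: "(as y y z \<odot> x) = 0" by (simp only: LA[of "y" "z"] m0r m0l)
  have r4: "(x \<odot> as y y z) = 0" by (simp only: LA[of "y" "z"] m0r m0l)
  have r5: "(y \<odot> (as x z y + as z x y)) = 0" by (simp only: Lz[of "x" "z" "y"] m0r m0l)
  have r6: "(as x (y \<odot> z) y + as (y \<odot> z) x y) = 0" by (simp only: Lz[of "x" "(y \<odot> z)" "y"] m0r m0l)
  have r7: "(as x y (y \<odot> z) + as x (y \<odot> z) y) = 0" by (simp only: Rz[of "x" "y" "(y \<odot> z)"] m0r m0l)
  have r8: "(as y z (x \<odot> y) + as y (x \<odot> y) z) = 0" by (simp only: Rz[of "y" "z" "(x \<odot> y)"] m0r m0l)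
  have r9: "(as y (x \<odot> y) z + as (x \<odot> y) y z) = 0" by (simp only: Lz[of "y" "(x \<odot> y)" "z"] m0r m0l)
  have r10: "(as x y y \<odot> z) = 0" by (simp only: RA[of "x" "y"] m0r m0l)
  have r11: "(y \<odot> (as x y z + as y x z)) = 0" by (simp only: Lz[of "x" "y" "z"] m0r m0l)
  have r12: "(y \<odot> (as x y z + as x z y)) = 0" by (simp only: Rz[of "x" "y" "z"] m0r m0l)
  have r13: "((as y x z + as y z x) \<odot> y) = 0" by (simp only: Rz[of "y" "x" "z"] m0r m0l)
  have r14: "(y \<odot> (as y x z + as y z x)) = 0" by (simp only: Rz[of "y" "x" "z"] m0r m0l)
  have r15: "(as (y \<odot> y) x z + as (y \<odot> y) z x) = 0" by (simp only: Rz[of "(y \<odot> y)" "x" "z"] m0r m0l)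
  have r16: "(as y y (z \<odot> x) + as y (z \<odot> x) y) = 0" by (simp only: Rz[of "y" "y" "(z \<odot> x)"] m0r m0l)
  have r17: "(as x (y \<odot> y) z + as (y \<odot> y) x z) = 0" by (simp only: Lz[of "x" "(y \<odot> y)" "z"] m0r m0l)
  have "as x y (y \<odot> z) - as x y z \<odot> y = 0 - ((as x y z + as y x z) \<odot> y) + (as x y (y \<odot> z) + as y x (y \<odot> z)) - (as y x (y \<odot> z) + as y (y \<odot> z) x) - (as y y z \<odot> x) - (x \<odot> as y y z) + (y \<odot> (as x z y + as z x y)) - (as x (y \<odot> z) y + as (y \<odot> z) x y) + (as x y (y \<odot> z) + as x (y \<odot> z) y) - (as y z (x \<odot> y) + as y (x \<odot> y) z) + (as y (x \<odot> y) z + as (x \<odot> y) y z) - (as x y y \<odot> z) + (y \<odot> (as x y z + as y x z)) - (y \<odot> (as x y z + as x z y)) + ((as y x z + as y z x) \<odot> y) - (y \<odot> (as y x z + as y z x)) + (as (y \<odot> y) x z + as (y \<odot> y) z x) + (as y y (z \<odot> x) + as y (z \<odot> x) y) - (as x (y \<odot> y) z + as (y \<odot> y) x z)" by (simp add: as_def expand)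
  also have "\<dots> = 0" by (simp only: r0 r1 r2 r3 r4 r5 r6 r7 r8 r9 r10 r11 r12 r13 r14 r15 r16 r17) simp

  finally show ?thesis by simp
qed

lemma sw12: "as b a c = - as a b c" using Lz[of a b c] by (simp add: eq_neg_iff_add_eq_0 add.commute)
lemma sw23: "as c b a = - as c a b" using Rz[of c a b] by (simp add: eq_neg_iff_add_eq_0 add.commute)
lemma cyc: "as a b c = as b c a" using sw12[of b a c] sw23[of b a c] by simp
lemma as_add3: "as x y (a + b) = as x y a + as x y b" by (simp add: as_def expand)
lemma as_e3[simp]: "as x y e = 0" by (simp add: as_def er)
lemma as_0_3[simp]: "as x y 0 = 0" by (simp add: as_def)

lemma I1': "as x y (x \<odot> z) = as x y z \<odot> x"
proof -
  have "as x y (x \<odot> z) = - as y x (x \<odot> z)" by (simp add: sw12[of y x])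
  also have "\<dots> = - (as y x z \<odot> x)" by (simp add: I1)
  also have "\<dots> = as x y z \<odot> x" by (simp add: sw12[of y x] mml)
  finally show ?thesis .
qed

lemma I2: "as x y ((x \<odot> y) \<odot> z) = as x y z \<odot> (y \<odot> x)"
proof -
  define a where "a = as x y z"
  have 1: "(x \<odot> y) \<odot> z = x \<odot> (y \<odot> z) + a" by (simp add: a_def as_def)
  have 2: "as x y (x \<odot> (y \<odot> z)) = (a \<odot> y) \<odot> x" by (simp add: I1' I1 a_def)
  have 3: "a \<odot> (y \<odot> x) = (a \<odot> y) \<odot> x - as a y x" by (simp add: as_def)
  have 4: "- as a y x = as x y a" using sw23[of a y x] cyc[of a x y] by simp
  show ?thesis unfolding 1 as_add3 2 a_def[symmetric] 3 using 4 by simp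
qed

definition isinv :: "'b \<Rightarrow> 'b \<Rightarrow> bool" where
  "isinv u v \<longleftrightarrow> u \<odot> v = e \<and> v \<odot> u = e"

lemma isinv_sym: "isinv u v \<Longrightarrow> isinv v u" by (auto simp: isinv_def)

lemma Lw: assumes "isinv u v" shows "as w u v = 0"
proof -
  define a where "a = as w u v"
  have uv: "u \<odot> v = e" and vu: "v \<odot> u = e" using assms by (auto simp: isinv_def)
  have au: "a \<odot> u = 0" using I1[of w u v] by (simp add: uv a_def)
  have "as w v u \<odot> v = 0" using I1[of w v u] by (simp add: vu)
  hence av: "a \<odot> v = 0" using sw23[of w v u] by (simp add: a_def mml)
  have 1: "as a u v = - a" by (simp add: as_def au uv er)
  have "as a v u = - a" by (simp add: as_def av vu er)
  hence "as a u v = a" using sw23[of a v u] by simp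
  with 1 have "a = - a" by simp
  hence aa: "a + a = 0" by (simp only: eq_neg_iff_add_eq_0)
  show ?thesis using two[OF aa] a_def by simp
qed

lemma Lv1: "isinv u v \<Longrightarrow> v \<odot> (u \<odot> z) = z"
proof -
  assume h: "isinv u v"
  have "as v u z = 0" using Lw[OF isinv_sym[OF h], of z] cyc[of v u z] cyc[of u z v] by simp
  thus ?thesis using h by (simp add: as_def isinv_def el)
qed
lemma Lv2: assumes "isinv u v" shows "u \<odot> (v \<odot> z) = z"
  using Lv1[OF isinv_sym[OF assms]] .
lemma Lv3: "isinv u v \<Longrightarrow> (z \<odot> u) \<odot> v = z"
proof -
  assume h: "isinv u v"
  have "as z u v = 0" using Lw[OF h] by simp
  thus ?thesis using h by (simp add: as_def isinv_def er)
qed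
lemma Lv4: assumes "isinv u v" shows "(z \<odot> v) \<odot> u = z"
  using Lv3[OF isinv_sym[OF assms]] .

lemma inv_unique: "isinv u v \<Longrightarrow> isinv u v' \<Longrightarrow> v = v'"
  using Lv1[of u v v'] by (simp add: isinv_def er)

lemma prod_right: assumes x: "isinv x x'" and y: "isinv y y'"
  shows "(x \<odot> y) \<odot> (y' \<odot> x') = e"
proof -
  define w where "w = y' \<odot> x'"
  have yw: "y \<odot> w = x'" using Lv2[OF y] w_def by simp
  have "as x y x' = 0" using Lw[OF x, of y] cyc[of x y x'] sw23[of y x x'] by simp
  hence "as x y w \<odot> y = 0" using I1[of x y w] yw by simp
  hence "as x y w = 0" using Lv3[OF y, of "as x y w"] by simp
  hence "(x \<odot> y) \<odot> w = x \<odot> (y \<odot> w)" by (simp add: as_def)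
  thus ?thesis using yw x by (simp add: w_def isinv_def)
qed

lemma prod_inv: "isinv x x' \<Longrightarrow> isinv y y' \<Longrightarrow> isinv (x \<odot> y) (y' \<odot> x')"
proof -
  assume x: "isinv x x'" and y: "isinv y y'"
  show ?thesis unfolding isinv_def
    using prod_right[OF x y] prod_right[OF isinv_sym[OF y] isinv_sym[OF x]] by simp
qed

lemma key: assumes p: "isinv (x \<odot> y) h" and q: "isinv (y \<odot> x) k"
  shows "isinv x (y \<odot> h)" and "y \<odot> h = k \<odot> y"
proof -
  have ph: "(x \<odot> y) \<odot> h = e" and kq: "k \<odot> (y \<odot> x) = e" "(y \<odot> x) \<odot> k = e" using p q by (auto simp: isinv_def)
  have "as x y h \<odot> (y \<odot> x) = 0" using I2[of x y h] ph by simp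
  hence "as x y h = 0" using Lv3[OF q, of "as x y h"] by simp
  hence r: "x \<odot> (y \<odot> h) = e" using ph by (simp add: as_def)
  have "as y x k \<odot> (x \<odot> y) = 0" using I2[of y x k] kq by simp
  hence "as y x k = 0" using Lv3[OF p, of "as y x k"] by simp
  hence "as k y x = 0" using cyc[of k y x] by simp
  hence l: "(k \<odot> y) \<odot> x = e" using kq by (simp add: as_def)
  have "as (k \<odot> y) x (x \<odot> (y \<odot> h)) = as (k \<odot> y) x (y \<odot> h) \<odot> x" by (rule I1)
  hence "(y \<odot> h - k \<odot> y) \<odot> x = 0" by (simp add: r l as_def el er)
  hence rl: "(y \<odot> h) \<odot> x = e" using l by (simp add: mdl)
  show "isinv x (y \<odot> h)" using r rl by (simp add: isinv_def)
  have "as (k \<odot> y) x (y \<odot> h) = 0" using Lw[OF \<open>isinv x (y \<odot> h)\<close>] by simp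
  thus "y \<odot> h = k \<odot> y" using l r by (simp add: as_def el er)
qed
end

lemma altA: "altr ((*) :: 'a::alt_star_algebra \<Rightarrow> 'a \<Rightarrow> 'a) 1"
proof
  fix a b c :: 'a
  show "a * (b + c) = a * b + a * c" by (rule alt_star_algebra_class.distrib_left)
  show "(a + b) * c = a * c + b * c" by (rule alt_star_algebra_class.distrib_right)
  show "1 * a = a" by (rule alt_star_algebra_class.one_mult)
  show "a * 1 = a" by (rule alt_star_algebra_class.mult_one)
  show "a * a * b = a * (a * b)" by (rule alt_star_algebra_class.left_alternative)
  show "b * a * a = b * (a * a)" by (rule alt_star_algebra_class.right_alternative)
  show "a + a = 0 \<Longrightarrow> a = 0" by (metis scaleR_2 scaleR_eq_0_iff zero_neq_numeral)
qed

interpretation A: altr "(*) :: 'a::alt_star_algebra \<Rightarrow> 'a \<Rightarrow> 'a" 1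
  by (rule altA)

lemma Alin: "((b::'a::alt_star_algebra) * a) * d = a * (b * d) + b * (a * d) - (a * b) * d"
  using A.Lz[of a b d] unfolding A.as_def by (simp add: algebra_simps)
lemma Rlin: "((d::'a::alt_star_algebra) * b) * a = d * (a * b) + d * (b * a) - (d * a) * b"
  using A.Rz[of d a b] unfolding A.as_def by (simp add: algebra_simps)

lemma altC: "altr (cmult :: ('a::alt_star_algebra \<times> 'a) \<Rightarrow> _) (1, 0)"
proof
  fix a b c :: "'a \<times> 'a"
  show "cmult a (b + c) = cmult a b + cmult a c" by (simp add: cmult_def A.expand algebra_simps)
  show "cmult (a + b) c = cmult a c + cmult b c" by (simp add: cmult_def A.expand algebra_simps)
  show "cmult (1, 0) a = a" by (simp add: cmult_def A.el)
  show "cmult a (1, 0) = a" by (simp add: cmult_def A.er)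
  show "cmult (cmult a a) b = cmult a (cmult a b)"
    by (simp add: cmult_def A.expand A.la Alin[of "snd a" "fst a"] algebra_simps)
  show "cmult (cmult b a) a = cmult b (cmult a a)"
    by (simp add: cmult_def A.expand A.ra Rlin[of _ "snd a" "fst a"] algebra_simps)
  show "a + a = 0 \<Longrightarrow> a = 0"
    by (cases a) (auto simp: zero_prod_def intro: A.two)
qed

interpretation C: altr "cmult :: ('a::alt_star_algebra \<times> 'a) \<Rightarrow> _" "(1, 0)"
  by (rule altC)




lemma invol_0[simp]: "invol (0::'a::alt_star_algebra) = 0"
  using invol_scaleR[of 0 "0::'a"] by simp
lemma invol_minus[simp]: "invol (- (a::'a::alt_star_algebra)) = - invol a"
  using invol_scaleR[of "-1" a] by simp
lemma invol_diff: "invol ((a::'a::alt_star_algebra) - b) = invol a - invol b"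
  using invol_add[of a "-b"] by simp

lemma sph_invol: "J \<in> sphere_A \<Longrightarrow> invol J = - (J::'a::alt_star_algebra)"
  by (simp add: sphere_A_def trace_A_def eq_neg_iff_add_eq_0 add.commute)
lemma sph_sq: "J \<in> sphere_A \<Longrightarrow> J * J = - (1::'a::alt_star_algebra)"
proof -
  assume h: "J \<in> sphere_A"
  hence "J * invol J = 1" by (simp add: sphere_A_def norm_A_def)
  thus ?thesis using sph_invol[OF h] by (simp add: A.mmr minus_equation_iff)
qed
lemma sph_neg: "J \<in> sphere_A \<Longrightarrow> - J \<in> sphere_A"
proof -
  assume h: "J \<in> sphere_A"
  have "invol (-J) = J" using sph_invol[OF h] by simp
  moreover have "(-J) * J = 1" using sph_sq[OF h] by (simp add: A.mml)
  ultimately show ?thesis by (simp add: sphere_A_def trace_A_def norm_A_def)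
qed

definition pt :: "complex \<Rightarrow> 'a::alt_star_algebra \<Rightarrow> 'a" where
  "pt z J = Re z *\<^sub>R 1 + Im z *\<^sub>R J"

lemma circ_iff: "x \<in> circ D \<longleftrightarrow> (\<exists>z J. z \<in> D \<and> J \<in> sphere_A \<and> x = pt z J)"
  by (auto simp: circ_def pt_def)

lemma one_neq0: "(1::'a::alt_star_algebra) \<noteq> 0" by (rule one_neq_zero)

lemma scaleR1_inj: "a *\<^sub>R (1::'a::alt_star_algebra) = b *\<^sub>R 1 \<Longrightarrow> a = b"
  using one_neq0 by (metis scaleR_cancel_right)

lemma rep: assumes J: "J \<in> sphere_A" and K: "K \<in> sphere_A"
  and eq: "a *\<^sub>R 1 + b *\<^sub>R J = c *\<^sub>R 1 + d *\<^sub>R (K::'a::alt_star_algebra)"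
  shows "a = c" "b *\<^sub>R J = d *\<^sub>R K" "b * b = d * d"
proof -
  have "invol (a *\<^sub>R 1 + b *\<^sub>R J) = invol (c *\<^sub>R 1 + d *\<^sub>R K)" using eq by simp
  hence e2: "a *\<^sub>R 1 - b *\<^sub>R J = c *\<^sub>R 1 - d *\<^sub>R K"
    by (simp add: invol_add invol_scaleR invol_one sph_invol[OF J] sph_invol[OF K])
  have "(a *\<^sub>R 1 + b *\<^sub>R J) + (a *\<^sub>R 1 - b *\<^sub>R J) = (c *\<^sub>R 1 + d *\<^sub>R K) + (c *\<^sub>R 1 - d *\<^sub>R K)"
    using eq e2 by simp
  hence "(a *\<^sub>R 1 - c *\<^sub>R 1) + (a *\<^sub>R 1 - c *\<^sub>R 1) = (0::'a)" by (simp add: algebra_simps)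
  hence "a *\<^sub>R 1 - c *\<^sub>R 1 = (0::'a)" by (rule A.two)
  thus ac: "a = c" using scaleR1_inj by simp
  show bd: "b *\<^sub>R J = d *\<^sub>R K" using eq ac by simp
  have "(b *\<^sub>R J) * (b *\<^sub>R J) = (d *\<^sub>R K) * (d *\<^sub>R K)" using bd by simp
  hence "(b * b) *\<^sub>R (J * J) = (d * d) *\<^sub>R (K * K)"
    by (simp add: scaleR_mult_left scaleR_mult_right)
  hence "(- (b * b)) *\<^sub>R (1::'a) = (- (d * d)) *\<^sub>R 1"
    by (simp add: sph_sq[OF J] sph_sq[OF K])
  hence "- (b * b) = - (d * d)" by (rule scaleR1_inj)
  thus "b * b = d * d" by simp
qed


lemma stem_real: assumes "is_stem D F" "z \<in> D" "Im z = 0" shows "snd (F z) = 0"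
proof -
  have "cnj z = z" using assms(3) by (simp add: complex_eq_iff)
  hence "F z = cconj (F z)" using assms(1,2) unfolding is_stem_def by metis
  hence "snd (F z) = - snd (F z)" by (simp add: cconj_def prod_eq_iff)
  hence "snd (F z) + snd (F z) = 0" by (simp only: eq_neg_iff_add_eq_0)
  thus ?thesis by (rule A.two)
qed

lemma val_consistent:
  assumes st: "is_stem D F" and z: "z \<in> D" and w: "w \<in> D" and J: "J \<in> sphere_A" and K: "K \<in> sphere_A"
    and eq: "pt z J = pt w (K::'a::alt_star_algebra)"
  shows "fst (F z) + J * snd (F z) = fst (F w) + K * snd (F w)"
proof -
  have re: "Re z = Re w" and sc: "Im z *\<^sub>R J = Im w *\<^sub>R K" and sq: "Im z * Im z = Im w * Im w"
    using rep[OF J K eq[unfolded pt_def]] by auto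
  have "Im w = Im z \<or> Im w = - Im z" using sq by (metis minus_mult_minus square_eq_iff)
  moreover
  { assume "Im z = 0"
    hence "Im w = 0" using sq by simp
    hence "z = w" using re \<open>Im z = 0\<close> by (simp add: complex_eq_iff)
    hence ?thesis using stem_real[OF st z \<open>Im z = 0\<close>] by simp }
  moreover
  { assume nz: "Im z \<noteq> 0" and e: "Im w = Im z"
    have "Im z *\<^sub>R J = Im z *\<^sub>R K" using sc e by metis
    hence "J = K" using nz by simp
    moreover have "z = w" using re e by (simp add: complex_eq_iff)
    ultimately have ?thesis by simp }
  moreover
  { assume nz: "Im z \<noteq> 0" and e: "Im w = - Im z"
    have s1: "Im z *\<^sub>R J = - (Im z *\<^sub>R K)" using sc e by simp
    have "Im z *\<^sub>R K = Im z *\<^sub>R (- J)" by (simp add: s1)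
    hence "K = - J \<or> Im z = 0" by (simp only: scaleR_cancel_left)
    with nz have KJ: "K = - J" by simp
    have wz: "w = cnj z" using re e by (simp add: complex_eq_iff)
    have "F w = cconj (F z)" using st z wz unfolding is_stem_def by simp
    hence ?thesis using KJ by (simp add: cconj_def A.mml A.mmr) }
  ultimately show ?thesis by blast
qed

definition indf :: "complex set \<Rightarrow> (complex \<Rightarrow> 'a::alt_star_algebra \<times> 'a) \<Rightarrow> 'a \<Rightarrow> 'a" where
  "indf D F x = (if x \<in> circ D then (SOME y. \<exists>z J. z \<in> D \<and> J \<in> sphere_A \<and> x = pt z J \<and> y = fst (F z) + J * snd (F z)) else 0)"

lemma induces_ex: assumes st: "is_stem D F" shows "induces D F (indf D F)"
  unfolding induces_def
proof (intro conjI allI impI)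
  fix x :: 'a assume "x \<notin> circ D" thus "indf D F x = 0" by (simp add: indf_def)
next
  fix z J assume z: "z \<in> D" and J: "(J::'a) \<in> sphere_A"
  have c: "pt z J \<in> circ D" using z J by (auto simp: circ_iff)
  let ?P = "\<lambda>y. \<exists>z' J'. z' \<in> D \<and> J' \<in> sphere_A \<and> pt z J = pt z' J' \<and> y = fst (F z') + J' * snd (F z')"
  have "?P (fst (F z) + J * snd (F z))" using z J by blast
  hence "?P (SOME y. ?P y)" by (rule someI)
  then obtain z' J' where z': "z' \<in> D" "J' \<in> sphere_A" "pt z J = pt z' J'"
    and y: "(SOME y. ?P y) = fst (F z') + J' * snd (F z')" by blast
  have "indf D F (pt z J) = (SOME y. ?P y)" using c by (simp add: indf_def)
  also have "\<dots> = fst (F z) + J * snd (F z)" using y val_consistent[OF st z z'(1) J z'(2) z'(3)] by simp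
  finally show "indf D F (Re z *\<^sub>R 1 + Im z *\<^sub>R J) = fst (F z) + J * snd (F z)" by (simp add: pt_def)
qed

lemma induces_unique: "induces D F f \<Longrightarrow> induces D F g \<Longrightarrow> f = g"
proof
  fix x assume f: "induces D F f" and g: "induces D F g"
  show "f x = g x"
  proof (cases "x \<in> circ D")
    case True
    then obtain z J where "z \<in> D" "J \<in> sphere_A" "x = pt z J" by (auto simp: circ_iff)
    thus ?thesis using f g by (simp add: induces_def pt_def)
  next
    case False thus ?thesis using f g by (simp add: induces_def)
  qed
qed

lemma induced_eq: assumes "is_stem D F" shows "induces D F (induced D F)"
proof -
  have ex1: "\<exists>!f. induces D F f" using induces_ex[OF assms] induces_unique by blast
  show ?thesis unfolding induced_def by (rule theI'[OF ex1])
qed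

lemma stem_unique:
  assumes S: "(sphere_A :: 'a::alt_star_algebra set) \<noteq> {}"
    and F: "is_stem D F" and G: "is_stem D G" and f: "induces D F (f::'a \<Rightarrow> 'a)" and g: "induces D G f"
  shows "F = G"
proof
  fix z
  show "F z = G z"
  proof (cases "z \<in> D")
    case False thus ?thesis using F G by (simp add: is_stem_def)
  next
    case z: True
    obtain J :: 'a where J: "J \<in> sphere_A" using S by blast
    have mJ: "- J \<in> sphere_A" using sph_neg[OF J] .
    have e1: "fst (F z) + J * snd (F z) = fst (G z) + J * snd (G z)"
      using f g z J unfolding induces_def by metis
    have e2: "fst (F z) + (-J) * snd (F z) = fst (G z) + (-J) * snd (G z)"
      using f g z mJ unfolding induces_def by metis
    hence e2': "fst (F z) - J * snd (F z) = fst (G z) - J * snd (G z)" by (simp add: A.mml)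
    have "(fst (F z) + J * snd (F z)) + (fst (F z) - J * snd (F z)) = (fst (G z) + J * snd (G z)) + (fst (G z) - J * snd (G z))"
      using e1 e2' by simp
    hence "(fst (F z) - fst (G z)) + (fst (F z) - fst (G z)) = 0"
      by (simp add: algebra_simps)
    hence a: "fst (F z) = fst (G z)" using A.two by (metis eq_iff_diff_eq_0)
    hence "J * snd (F z) = J * snd (G z)" using e1 by simp
    hence "J * (J * snd (F z)) = J * (J * snd (G z))" by simp
    hence "(J * J) * snd (F z) = (J * J) * snd (G z)" by (simp add: A.la)
    hence "snd (F z) = snd (G z)" by (simp add: sph_sq[OF J] A.mml A.el)
    thus ?thesis using a by (simp add: prod_eq_iff)
  qed
qed


lemma slice_stem:
  assumes S: "(sphere_A :: 'a::alt_star_algebra set) \<noteq> {}" and f: "slice_fun D (f::'a \<Rightarrow> 'a)"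
  shows "is_stem D (stem_of D f)" "induces D (stem_of D f) f"
proof -
  have ex1: "\<exists>!F. is_stem D F \<and> induces D F f"
    using f stem_unique[OF S] unfolding slice_fun_def by blast
  have "is_stem D (stem_of D f) \<and> induces D (stem_of D f) f"
    unfolding stem_of_def by (rule theI'[OF ex1])
  thus "is_stem D (stem_of D f)" "induces D (stem_of D f) f" by auto
qed

lemma stem_of_induced:
  assumes S: "(sphere_A :: 'a::alt_star_algebra set) \<noteq> {}" and F: "is_stem D (F :: complex \<Rightarrow> 'a \<times> 'a)"
  shows "stem_of D (induced D F) = F" "slice_fun D (induced D F)"
proof -
  show sf: "slice_fun D (induced D F)" using F induced_eq[OF F] by (auto simp: slice_fun_def)
  show "stem_of D (induced D F) = F"
    using stem_unique[OF S slice_stem(1)[OF S sf] F slice_stem(2)[OF S sf] induced_eq[OF F]] .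
qed

lemma slice_eqI:
  assumes S: "(sphere_A :: 'a::alt_star_algebra set) \<noteq> {}" and f: "slice_fun D (f::'a \<Rightarrow> 'a)"
    and g: "slice_fun D g" and eq: "\<And>z. z \<in> D \<Longrightarrow> stem_of D f z = stem_of D g z"
  shows "f = g"
proof -
  have "stem_of D f = stem_of D g"
  proof
    fix z show "stem_of D f z = stem_of D g z"
      using eq slice_stem(1)[OF S f] slice_stem(1)[OF S g] by (cases "z \<in> D") (auto simp: is_stem_def)
  qed
  hence "induces D (stem_of D f) g" using slice_stem(2)[OF S g] by simp
  thus ?thesis by (rule induces_unique[OF slice_stem(2)[OF S f]])
qed

lemma cconj_cmult: "cmult (cconj a) (cconj b) = cconj (cmult (a::'a::alt_star_algebra \<times> 'a) b)"
  by (simp add: cmult_def cconj_def A.mml A.mmr)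
lemma cinvol_cconj: "cinvol (cconj a) = cconj (cinvol (a::'a::alt_star_algebra \<times> 'a))"
  by (simp add: cinvol_def cconj_def)
lemma cinvol_cmult: "cinvol (cmult a b) = cmult (cinvol b) (cinvol (a::'a::alt_star_algebra \<times> 'a))"
  by (simp add: cmult_def cinvol_def invol_diff invol_add invol_mult add.commute)
lemma cinvol_cinvol[simp]: "cinvol (cinvol a) = (a::'a::alt_star_algebra \<times> 'a)"
  by (simp add: cinvol_def invol_invol)
lemma cinvol_one[simp]: "cinvol (1, 0) = ((1, 0)::'a::alt_star_algebra \<times> 'a)"
  by (simp add: cinvol_def invol_one)
lemma cinvol_zero[simp]: "cinvol (0, 0) = ((0, 0)::'a::alt_star_algebra \<times> 'a)"
  by (simp add: cinvol_def)
lemma cmult_zero[simp]: "cmult (0, 0) (0, 0) = ((0, 0)::'a::alt_star_algebra \<times> 'a)"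
  by (simp add: cmult_def)

lemma is_stem_mult: "is_stem D F \<Longrightarrow> is_stem D G \<Longrightarrow> is_stem D (\<lambda>z. cmult (F z) (G z :: 'a::alt_star_algebra \<times> 'a))"
  by (simp add: is_stem_def cconj_cmult)
lemma is_stem_cinvol: "is_stem D F \<Longrightarrow> is_stem D (\<lambda>z. cinvol (F z :: 'a::alt_star_algebra \<times> 'a))"
  by (simp add: is_stem_def cinvol_cconj)

definition ONE :: "complex set \<Rightarrow> complex \<Rightarrow> 'a::alt_star_algebra \<times> 'a" where
  "ONE D z = (if z \<in> D then (1, 0) else (0, 0))"

lemma is_stem_ONE: "\<forall>z\<in>D. cnj z \<in> D \<Longrightarrow> is_stem D (ONE D)"
  by (simp add: is_stem_def ONE_def cconj_def)

lemma slice_mult_stem: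
  assumes S: "(sphere_A :: 'a::alt_star_algebra set) \<noteq> {}" and f: "slice_fun D (f::'a \<Rightarrow> 'a)" and g: "slice_fun D g"
  shows "slice_fun D (slice_mult D f g)" "stem_of D (slice_mult D f g) = (\<lambda>z. cmult (stem_of D f z) (stem_of D g z))"
  using stem_of_induced[OF S is_stem_mult[OF slice_stem(1)[OF S f] slice_stem(1)[OF S g]]]
  unfolding slice_mult_def by auto

lemma slice_cnj_stem:
  assumes S: "(sphere_A :: 'a::alt_star_algebra set) \<noteq> {}" and f: "slice_fun D (f::'a \<Rightarrow> 'a)"
  shows "slice_fun D (slice_cnj D f)" "stem_of D (slice_cnj D f) = (\<lambda>z. cinvol (stem_of D f z))"
  using stem_of_induced[OF S is_stem_cinvol[OF slice_stem(1)[OF S f]]]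
  unfolding slice_cnj_def by auto

lemma slice_one_stem:
  assumes S: "(sphere_A :: 'a::alt_star_algebra set) \<noteq> {}" and cc: "\<forall>z\<in>D. cnj z \<in> D"
  shows "slice_fun D (slice_one D :: 'a \<Rightarrow> 'a)" "stem_of D (slice_one D :: 'a \<Rightarrow> 'a) = ONE D"
proof -
  have "induces D (ONE D) (slice_one D :: 'a \<Rightarrow> 'a)"
    by (auto simp: induces_def ONE_def slice_one_def circ_def)
  hence e: "slice_one D = (induced D (ONE D) :: 'a \<Rightarrow> 'a)"
    using induced_eq[OF is_stem_ONE[OF cc]] induces_unique by blast
  show "slice_fun D (slice_one D :: 'a \<Rightarrow> 'a)" "stem_of D (slice_one D :: 'a \<Rightarrow> 'a) = ONE D"
    unfolding e using stem_of_induced[OF S is_stem_ONE[OF cc]] by auto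
qed




definition cinvC :: "'a::alt_star_algebra \<times> 'a \<Rightarrow> 'a \<times> 'a" where
  "cinvC u = (THE v. C.isinv u v)"

lemma cinvC_eq: "C.isinv u v \<Longrightarrow> cinvC u = (v::'a::alt_star_algebra \<times> 'a)"
  unfolding cinvC_def by (rule the_equality) (auto intro: C.inv_unique)

lemma cinvC_spec: "\<exists>v. C.isinv u v \<Longrightarrow> C.isinv u (cinvC (u::'a::alt_star_algebra \<times> 'a))"
  using cinvC_eq by metis

lemma isinv_cconj: "C.isinv u v \<Longrightarrow> C.isinv (cconj u) (cconj (v::'a::alt_star_algebra \<times> 'a))"
  unfolding C.isinv_def by (simp add: cconj_cmult) (simp add: cconj_def)

lemma isinv_cinvol: "C.isinv u v \<Longrightarrow> C.isinv (cinvol u) (cinvol (v::'a::alt_star_algebra \<times> 'a))"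
  unfolding C.isinv_def by (simp add: cinvol_cmult[symmetric])

definition INV :: "complex set \<Rightarrow> (complex \<Rightarrow> 'a::alt_star_algebra \<times> 'a) \<Rightarrow> complex \<Rightarrow> 'a \<times> 'a" where
  "INV D F z = (if z \<in> D then cinvC (F z) else (0, 0))"

lemma is_stem_INV:
  assumes cc: "\<forall>z\<in>D. cnj z \<in> D" and F: "is_stem D F" and inv: "\<forall>z\<in>D. \<exists>v. C.isinv (F z) v"
  shows "is_stem D (INV D (F :: complex \<Rightarrow> 'a::alt_star_algebra \<times> 'a))"
  unfolding is_stem_def
proof (intro conjI ballI allI impI)
  fix z assume z: "z \<in> D"
  have "F (cnj z) = cconj (F z)" using F z by (simp add: is_stem_def)
  moreover have "C.isinv (cconj (F z)) (cconj (cinvC (F z)))"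
    using isinv_cconj[OF cinvC_spec] inv z by blast
  ultimately show "INV D F (cnj z) = cconj (INV D F z)"
    using cc z by (simp add: INV_def cinvC_eq)
next
  fix z assume "z \<notin> D" thus "INV D F z = (0, 0)" by (simp add: INV_def)
qed

lemma inv_witness:
  assumes S: "(sphere_A :: 'a::alt_star_algebra set) \<noteq> {}" and cc: "\<forall>z\<in>D. cnj z \<in> D"
    and f: "slice_fun D (f::'a \<Rightarrow> 'a)" and inv: "\<forall>z\<in>D. \<exists>v. C.isinv (stem_of D f z) v"
  shows "slice_fun D (induced D (INV D (stem_of D f)))"
    "stem_of D (induced D (INV D (stem_of D f))) = INV D (stem_of D f)"
    "slice_mult D f (induced D (INV D (stem_of D f))) = slice_one D"
    "slice_mult D (induced D (INV D (stem_of D f))) f = slice_one D"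
proof -
  let ?G = "INV D (stem_of D f)"
  have st: "is_stem D ?G" using is_stem_INV[OF cc slice_stem(1)[OF S f] inv] .
  show g: "slice_fun D (induced D ?G)" and sg: "stem_of D (induced D ?G) = ?G"
    using stem_of_induced[OF S st] by auto
  show "slice_mult D f (induced D ?G) = slice_one D"
  proof (rule slice_eqI[OF S slice_mult_stem(1)[OF S f g] slice_one_stem(1)[OF S cc]])
    fix z assume z: "z \<in> D"
    have "C.isinv (stem_of D f z) (cinvC (stem_of D f z))" using cinvC_spec inv z by blast
    thus "stem_of D (slice_mult D f (induced D ?G)) z = stem_of D (slice_one D) z"
      using z by (simp add: slice_mult_stem(2)[OF S f g] sg slice_one_stem(2)[OF S cc] INV_def ONE_def C.isinv_def)
  qed
  show "slice_mult D (induced D ?G) f = slice_one D"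
  proof (rule slice_eqI[OF S slice_mult_stem(1)[OF S g f] slice_one_stem(1)[OF S cc]])
    fix z assume z: "z \<in> D"
    have "C.isinv (stem_of D f z) (cinvC (stem_of D f z))" using cinvC_spec inv z by blast
    thus "stem_of D (slice_mult D (induced D ?G) f) z = stem_of D (slice_one D) z"
      using z by (simp add: slice_mult_stem(2)[OF S g f] sg slice_one_stem(2)[OF S cc] INV_def ONE_def C.isinv_def)
  qed
qed

lemma inv_char:
  assumes S: "(sphere_A :: 'a::alt_star_algebra set) \<noteq> {}" and cc: "\<forall>z\<in>D. cnj z \<in> D"
    and f: "slice_fun D (f::'a \<Rightarrow> 'a)"
  shows "slice_invertible D f \<longleftrightarrow> (\<forall>z\<in>D. \<exists>v. C.isinv (stem_of D f z) v)"
proof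
  assume "slice_invertible D f"
  then obtain g where g: "slice_fun D g" and fg: "slice_mult D f g = slice_one D"
    and gf: "slice_mult D g f = slice_one D" by (auto simp: slice_invertible_def)
  show "\<forall>z\<in>D. \<exists>v. C.isinv (stem_of D f z) v"
  proof
    fix z assume z: "z \<in> D"
    have "stem_of D (slice_mult D f g) z = ONE D z" "stem_of D (slice_mult D g f) z = ONE D z"
      using fg gf slice_one_stem(2)[OF S cc] by auto
    hence "C.isinv (stem_of D f z) (stem_of D g z)"
      using z by (simp add: slice_mult_stem(2)[OF S f g] slice_mult_stem(2)[OF S g f] ONE_def C.isinv_def)
    thus "\<exists>v. C.isinv (stem_of D f z) v" by blast
  qed
next
  assume inv: "\<forall>z\<in>D. \<exists>v. C.isinv (stem_of D f z) v"
  show "slice_invertible D f" unfolding slice_invertible_def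
    using inv_witness[OF S cc f inv] by blast
qed

lemma inv_stem:
  assumes S: "(sphere_A :: 'a::alt_star_algebra set) \<noteq> {}" and cc: "\<forall>z\<in>D. cnj z \<in> D"
    and f: "slice_fun D (f::'a \<Rightarrow> 'a)" and i: "slice_invertible D f"
  shows "slice_fun D (slice_inv D f)" "stem_of D (slice_inv D f) = INV D (stem_of D f)"
proof -
  have inv: "\<forall>z\<in>D. \<exists>v. C.isinv (stem_of D f z) v" using inv_char[OF S cc f] i by blast
  let ?g = "induced D (INV D (stem_of D f))"
  note W = inv_witness[OF S cc f inv]
  have "slice_inv D f = ?g" unfolding slice_inv_def
  proof (rule the_equality)
    show "slice_fun D ?g \<and> slice_mult D f ?g = slice_one D \<and> slice_mult D ?g f = slice_one D"
      using W by blast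
  next
    fix g assume "slice_fun D g \<and> slice_mult D f g = slice_one D \<and> slice_mult D g f = slice_one D"
    hence g: "slice_fun D g" and fg: "slice_mult D f g = slice_one D" and gf: "slice_mult D g f = slice_one D"
      by auto
    show "g = ?g"
    proof (rule slice_eqI[OF S g W(1)])
      fix z assume z: "z \<in> D"
      have "stem_of D (slice_mult D f g) z = ONE D z" "stem_of D (slice_mult D g f) z = ONE D z"
        using fg gf slice_one_stem(2)[OF S cc] by auto
      hence "C.isinv (stem_of D f z) (stem_of D g z)"
        using z by (simp add: slice_mult_stem(2)[OF S f g] slice_mult_stem(2)[OF S g f] ONE_def C.isinv_def)
      hence "stem_of D g z = cinvC (stem_of D f z)" using cinvC_eq by metis
      thus "stem_of D g z = stem_of D ?g z" using W(2) z by (simp add: INV_def)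
    qed
  qed
  thus "slice_fun D (slice_inv D f)" "stem_of D (slice_inv D f) = INV D (stem_of D f)"
    using W by auto
qed




lemma pw_cinvol: "(\<exists>v. C.isinv u v) \<longleftrightarrow> (\<exists>v. C.isinv (cinvol u) (v::'a::alt_star_algebra \<times> 'a))"
proof
  assume "\<exists>v. C.isinv u v"
  then obtain v where "C.isinv u v" by blast
  thus "\<exists>v. C.isinv (cinvol u) v" using isinv_cinvol by blast
next
  assume "\<exists>v. C.isinv (cinvol u) v"
  then obtain v where "C.isinv (cinvol u) v" by blast
  hence "C.isinv u (cinvol v)" using isinv_cinvol[of "cinvol u" v] by simp
  thus "\<exists>v. C.isinv u v" by blast
qed

lemma pw_N: "(\<exists>v. C.isinv u v) \<longleftrightarrow>
   (\<exists>h. C.isinv (cmult u (cinvol u)) h) \<and> (\<exists>k. C.isinv (cmult (cinvol u) u) (k::'a::alt_star_algebra \<times> 'a))"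
proof
  assume "\<exists>v. C.isinv u v"
  then obtain v where v: "C.isinv u v" by blast
  have cv: "C.isinv (cinvol u) (cinvol v)" using isinv_cinvol[OF v] .
  show "(\<exists>h. C.isinv (cmult u (cinvol u)) h) \<and> (\<exists>k. C.isinv (cmult (cinvol u) u) k)"
    using C.prod_inv[OF v cv] C.prod_inv[OF cv v] by blast
next
  assume "(\<exists>h. C.isinv (cmult u (cinvol u)) h) \<and> (\<exists>k. C.isinv (cmult (cinvol u) u) k)"
  then obtain h k where "C.isinv (cmult u (cinvol u)) h" "C.isinv (cmult (cinvol u) u) k" by blast
  thus "\<exists>v. C.isinv u v" using C.key(1) by blast
qed

theorem theorem2p1:
  fixes D :: "complex set" and f :: "'a::alt_star_algebra \<Rightarrow> 'a"
  assumes "D \<noteq> {}"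
    and "\<forall>z\<in>D. cnj z \<in> D"
    and "(sphere_A :: 'a set) \<noteq> {}"
    and "slice_fun D f"
  shows "(slice_invertible D f \<longleftrightarrow> slice_invertible D (slice_cnj D f))
    \<and> (slice_invertible D f \<longrightarrow>
         slice_inv D (slice_cnj D f) = slice_cnj D (slice_inv D f))
    \<and> (slice_invertible D f \<longleftrightarrow>
         slice_invertible D (slice_N D f) \<and> slice_invertible D (slice_N D (slice_cnj D f)))
    \<and> (slice_invertible D f \<longrightarrow>
         slice_inv D f = slice_mult D (slice_cnj D f) (slice_inv D (slice_N D f))
         \<and> slice_inv D f = slice_mult D (slice_inv D (slice_N D (slice_cnj D f))) (slice_cnj D f))
    \<and> (slice_invertible D f \<longrightarrow>
         slice_inv D (slice_N D f) = slice_mult D (slice_cnj D (slice_inv D f)) (slice_inv D f)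
         \<and> slice_inv D (slice_N D f) = slice_N D (slice_cnj D (slice_inv D f)))"
proof -
  note cc = assms(2) and S = assms(3) and f = assms(4)
  define F where "F = stem_of D f"
  define fc where "fc = slice_cnj D f"
  have fc: "slice_fun D fc" and sfc: "stem_of D fc = (\<lambda>z. cinvol (F z))"
    using slice_cnj_stem[OF S f] by (auto simp: fc_def F_def)
  define Nf where "Nf = slice_N D f"
  have Nf: "slice_fun D Nf" and sNf: "stem_of D Nf = (\<lambda>z. cmult (F z) (cinvol (F z)))"
    using slice_mult_stem[OF S f fc] by (auto simp: Nf_def slice_N_def fc_def[symmetric] sfc F_def)
  define Nfc where "Nfc = slice_N D fc"
  have fcc: "slice_fun D (slice_cnj D fc)" and sfcc: "stem_of D (slice_cnj D fc) = F"
    using slice_cnj_stem[OF S fc] by (auto simp: sfc)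
  have Nfc: "slice_fun D Nfc" and sNfc: "stem_of D Nfc = (\<lambda>z. cmult (cinvol (F z)) (F z))"
    using slice_mult_stem[OF S fc fcc] by (auto simp: Nfc_def slice_N_def sfc sfcc)
  have invf: "slice_invertible D f \<longleftrightarrow> (\<forall>z\<in>D. \<exists>v. C.isinv (F z) v)"
    using inv_char[OF S cc f] by (simp add: F_def)
  have invfc: "slice_invertible D fc \<longleftrightarrow> (\<forall>z\<in>D. \<exists>v. C.isinv (cinvol (F z)) v)"
    using inv_char[OF S cc fc] by (simp add: sfc)
  have invNf: "slice_invertible D Nf \<longleftrightarrow> (\<forall>z\<in>D. \<exists>v. C.isinv (cmult (F z) (cinvol (F z))) v)"
    using inv_char[OF S cc Nf] by (simp add: sNf)
  have invNfc: "slice_invertible D Nfc \<longleftrightarrow> (\<forall>z\<in>D. \<exists>v. C.isinv (cmult (cinvol (F z)) (F z)) v)"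
    using inv_char[OF S cc Nfc] by (simp add: sNfc)
  have P1: "slice_invertible D f \<longleftrightarrow> slice_invertible D fc"
    using invf invfc pw_cinvol by blast
  have P3: "slice_invertible D f \<longleftrightarrow> slice_invertible D Nf \<and> slice_invertible D Nfc"
    using invf invNf invNfc pw_N by blast
  have rest: "slice_inv D fc = slice_cnj D (slice_inv D f)
     \<and> slice_inv D f = slice_mult D fc (slice_inv D Nf)
     \<and> slice_inv D f = slice_mult D (slice_inv D Nfc) fc
     \<and> slice_inv D Nf = slice_mult D (slice_cnj D (slice_inv D f)) (slice_inv D f)
     \<and> slice_inv D Nf = slice_N D (slice_cnj D (slice_inv D f))"
    if i: "slice_invertible D f"
  proof -
    have ifc: "slice_invertible D fc" and iNf: "slice_invertible D Nf" and iNfc: "slice_invertible D Nfc"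
      using i P1 P3 by auto
    have pz: "C.isinv (F z) (cinvC (F z))" if "z \<in> D" for z
      using cinvC_spec invf i that by blast
    define g where "g = slice_inv D f"
    have g: "slice_fun D g" and sg: "stem_of D g = INV D F"
      using inv_stem[OF S cc f i] by (auto simp: g_def F_def)
    have gc: "slice_fun D (slice_cnj D g)" and sgc: "stem_of D (slice_cnj D g) = (\<lambda>z. cinvol (INV D F z))"
      using slice_cnj_stem[OF S g] by (auto simp: sg)
    have ginvfc: "slice_fun D (slice_inv D fc)" "stem_of D (slice_inv D fc) = INV D (\<lambda>z. cinvol (F z))"
      using inv_stem[OF S cc fc ifc] by (auto simp: sfc)
    have hNf: "slice_fun D (slice_inv D Nf)" "stem_of D (slice_inv D Nf) = INV D (\<lambda>z. cmult (F z) (cinvol (F z)))"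
      using inv_stem[OF S cc Nf iNf] by (auto simp: sNf)
    have hNfc: "slice_fun D (slice_inv D Nfc)" "stem_of D (slice_inv D Nfc) = INV D (\<lambda>z. cmult (cinvol (F z)) (F z))"
      using inv_stem[OF S cc Nfc iNfc] by (auto simp: sNfc)
    have keyz: "C.isinv (F z) (cmult (cinvol (F z)) (cinvC (cmult (F z) (cinvol (F z)))))
       \<and> cmult (cinvol (F z)) (cinvC (cmult (F z) (cinvol (F z)))) = cmult (cinvC (cmult (cinvol (F z)) (F z))) (cinvol (F z))"
      if z: "z \<in> D" for z
    proof -
      have hh: "C.isinv (cmult (F z) (cinvol (F z))) (cinvC (cmult (F z) (cinvol (F z))))"
        using cinvC_spec invNf iNf z by blast
      have kk: "C.isinv (cmult (cinvol (F z)) (F z)) (cinvC (cmult (cinvol (F z)) (F z)))"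
        using cinvC_spec invNfc iNfc z by blast
      show ?thesis using C.key[OF hh kk] by blast
    qed
    have e1: "slice_inv D fc = slice_cnj D g"
    proof (rule slice_eqI[OF S ginvfc(1) gc])
      fix z assume z: "z \<in> D"
      show "stem_of D (slice_inv D fc) z = stem_of D (slice_cnj D g) z"
        using z cinvC_eq[OF isinv_cinvol[OF pz[OF z]]] by (simp add: ginvfc(2) sgc INV_def)
    qed
    have e2: "g = slice_mult D fc (slice_inv D Nf)"
    proof (rule slice_eqI[OF S g slice_mult_stem(1)[OF S fc hNf(1)]])
      fix z assume z: "z \<in> D"
      show "stem_of D g z = stem_of D (slice_mult D fc (slice_inv D Nf)) z"
        using z cinvC_eq[OF conjunct1[OF keyz[OF z]]]
        by (simp add: sg slice_mult_stem(2)[OF S fc hNf(1)] sfc hNf(2) INV_def)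
    qed
    have e3: "g = slice_mult D (slice_inv D Nfc) fc"
    proof (rule slice_eqI[OF S g slice_mult_stem(1)[OF S hNfc(1) fc]])
      fix z assume z: "z \<in> D"
      show "stem_of D g z = stem_of D (slice_mult D (slice_inv D Nfc) fc) z"
        using z cinvC_eq[OF conjunct1[OF keyz[OF z]]] conjunct2[OF keyz[OF z]]
        by (simp add: sg slice_mult_stem(2)[OF S hNfc(1) fc] sfc hNfc(2) INV_def)
    qed
    have e4: "slice_inv D Nf = slice_mult D (slice_cnj D g) g"
    proof (rule slice_eqI[OF S hNf(1) slice_mult_stem(1)[OF S gc g]])
      fix z assume z: "z \<in> D"
      have "C.isinv (cmult (F z) (cinvol (F z))) (cmult (cinvol (cinvC (F z))) (cinvC (F z)))"
        using C.prod_inv[OF pz[OF z] isinv_cinvol[OF pz[OF z]]] .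
      thus "stem_of D (slice_inv D Nf) z = stem_of D (slice_mult D (slice_cnj D g) g) z"
        using z cinvC_eq by (simp add: hNf(2) slice_mult_stem(2)[OF S gc g] sgc sg INV_def)
    qed
    have e5: "slice_N D (slice_cnj D g) = slice_mult D (slice_cnj D g) g"
    proof -
      have gcc: "slice_fun D (slice_cnj D (slice_cnj D g))" "stem_of D (slice_cnj D (slice_cnj D g)) = stem_of D g"
        using slice_cnj_stem[OF S gc] by (auto simp: sgc sg)
      show ?thesis unfolding slice_N_def
      proof (rule slice_eqI[OF S slice_mult_stem(1)[OF S gc gcc(1)] slice_mult_stem(1)[OF S gc g]])
        fix z assume "z \<in> D"
        show "stem_of D (slice_mult D (slice_cnj D g) (slice_cnj D (slice_cnj D g))) z =
              stem_of D (slice_mult D (slice_cnj D g) g) z"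
          by (simp add: slice_mult_stem(2)[OF S gc gcc(1)] slice_mult_stem(2)[OF S gc g] gcc(2))
      qed
    qed
    show ?thesis using e1 e2 e3 e4 e5 by (simp add: g_def)
  qed
  show ?thesis using P1 P3 rest unfolding fc_def Nf_def Nfc_def by blast
qed


end
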